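(* Let $(\Omega,\Sigma,\mu)$ be a finite measure space and let $X(\mu)\subseteq L^0(\mu)$ be a Banach space of measurable functions. Then there is an equivalent norm on $X(\mu)$ under which $X(\mu)$ is a Banach function space if and only if $X(\mu)$ is a Banach rectangular function space with the subsequence property.
   Context: $L^0(\mu)$ is the space of equivalence classes (modulo $\mu$-a.e. equality) of real $\Sigma$-measurable functions. A Banach space of measurable functions is a vector subspace of $L^0(\mu)$ with a complete norm. It is rectangular if for some $C>0$, $\chi_Af\in X(\mu)$ and $\|\chi_Af\|\le C\|f\|$ for all $f\in X(\mu)$, $A\in\Sigma$. Subsequence property: whenever $f_n,f\in X(\mu)$ and $f_n\to f$ in norm, some subsequence converges to $f$ $\mu$-a.e. A Banach function space is such a space which is an ideal of $L^0(\mu)$ (if $f\in L^0(\mu)$, $g\in X(\mu)$, $|f|\le|g|$, then $f\in X(\mu)$) and whose norm satisfies $\|f\|\le\|g\|$ whenever $|f|\le|g|$. *)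

theory Defs
  imports "HOL-Analysis.Analysis"
begin

text \<open>Elements of L^0(mu) are represented by real Borel-measurable functions; a space
X(mu) is represented by a set X of such functions that is saturated under a.e. equality,
together with a functional N that is a norm on X modulo a.e. equality.\<close>

definition banach_mfs :: "'a measure \<Rightarrow> ('a \<Rightarrow> real) set \<Rightarrow> (('a \<Rightarrow> real) \<Rightarrow> real) \<Rightarrow> bool" where
  "banach_mfs M X N \<longleftrightarrow>
     X \<subseteq> borel_measurable M \<and>
     (\<forall>f\<in>X. \<forall>g\<in>borel_measurable M. (AE x in M. f x = g x) \<longrightarrow> g \<in> X) \<and>
     (\<lambda>x. 0) \<in> X \<and>
     (\<forall>f\<in>X. \<forall>g\<in>X. (\<lambda>x. f x + g x) \<in> X) \<and>
     (\<forall>f\<in>X. \<forall>c. (\<lambda>x. c * f x) \<in> X) \<and>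
     (\<forall>f\<in>X. 0 \<le> N f) \<and>
     (\<forall>f\<in>X. N f = 0 \<longleftrightarrow> (AE x in M. f x = 0)) \<and>
     (\<forall>f\<in>X. \<forall>c. N (\<lambda>x. c * f x) = \<bar>c\<bar> * N f) \<and>
     (\<forall>f\<in>X. \<forall>g\<in>X. N (\<lambda>x. f x + g x) \<le> N f + N g) \<and>
     (\<forall>s. (\<forall>n. s n \<in> X) \<longrightarrow>
          (\<forall>e>0. \<exists>K. \<forall>m\<ge>K. \<forall>n\<ge>K. N (\<lambda>x. s m x - s n x) < e) \<longrightarrow>
          (\<exists>f\<in>X. (\<lambda>n. N (\<lambda>x. s n x - f x)) \<longlonglongrightarrow> 0))"

definition rectangular :: "'a measure \<Rightarrow> ('a \<Rightarrow> real) set \<Rightarrow> (('a \<Rightarrow> real) \<Rightarrow> real) \<Rightarrow> bool" where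
  "rectangular M X N \<longleftrightarrow>
     (\<exists>C>0. \<forall>f\<in>X. \<forall>A\<in>sets M.
        (\<lambda>x. indicator A x * f x) \<in> X \<and> N (\<lambda>x. indicator A x * f x) \<le> C * N f)"

definition subsequence_property :: "'a measure \<Rightarrow> ('a \<Rightarrow> real) set \<Rightarrow> (('a \<Rightarrow> real) \<Rightarrow> real) \<Rightarrow> bool" where
  "subsequence_property M X N \<longleftrightarrow>
     (\<forall>fs f. (\<forall>n. fs n \<in> X) \<longrightarrow> f \<in> X \<longrightarrow> (\<lambda>n. N (\<lambda>x. fs n x - f x)) \<longlonglongrightarrow> 0 \<longrightarrow>
        (\<exists>r. strict_mono r \<and> (AE x in M. (\<lambda>n. fs (r n) x) \<longlonglongrightarrow> f x)))"

definition banach_function_space :: "'a measure \<Rightarrow> ('a \<Rightarrow> real) set \<Rightarrow> (('a \<Rightarrow> real) \<Rightarrow> real) \<Rightarrow> bool" where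
  "banach_function_space M X N \<longleftrightarrow>
     banach_mfs M X N \<and>
     (\<forall>f\<in>borel_measurable M. \<forall>g\<in>X. (AE x in M. \<bar>f x\<bar> \<le> \<bar>g x\<bar>) \<longrightarrow> f \<in> X) \<and>
     (\<forall>f\<in>X. \<forall>g\<in>X. (AE x in M. \<bar>f x\<bar> \<le> \<bar>g x\<bar>) \<longrightarrow> N f \<le> N g)"

definition equivalent_norms :: "('a \<Rightarrow> real) set \<Rightarrow> (('a \<Rightarrow> real) \<Rightarrow> real) \<Rightarrow> (('a \<Rightarrow> real) \<Rightarrow> real) \<Rightarrow> bool" where
  "equivalent_norms X N N' \<longleftrightarrow>
     (\<exists>c C. 0 < c \<and> 0 < C \<and> (\<forall>f\<in>X. c * N f \<le> N' f \<and> N' f \<le> C * N f))"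

end

theory Submission
  imports Defs
begin


context fixes M :: "'a measure" and X and N assumes B: "banach_mfs M X N"
begin
lemma bm_meas: "f \<in> X \<Longrightarrow> f \<in> borel_measurable M" using B unfolding banach_mfs_def by blast
lemma bm_sat: "f \<in> X \<Longrightarrow> g \<in> borel_measurable M \<Longrightarrow> (AE x in M. f x = g x) \<Longrightarrow> g \<in> X"
  using B unfolding banach_mfs_def by blast
lemma bm_zero: "(\<lambda>x. 0) \<in> X" using B unfolding banach_mfs_def by blast
lemma bm_add: "f \<in> X \<Longrightarrow> g \<in> X \<Longrightarrow> (\<lambda>x. f x + g x) \<in> X" using B unfolding banach_mfs_def by blast
lemma bm_scale: "f \<in> X \<Longrightarrow> (\<lambda>x. c * f x) \<in> X" using B unfolding banach_mfs_def by blast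
lemma bm_nonneg: "f \<in> X \<Longrightarrow> 0 \<le> N f" using B unfolding banach_mfs_def by blast
lemma bm_zero_iff: "f \<in> X \<Longrightarrow> N f = 0 \<longleftrightarrow> (AE x in M. f x = 0)" using B unfolding banach_mfs_def by blast
lemma bm_hom: "f \<in> X \<Longrightarrow> N (\<lambda>x. c * f x) = \<bar>c\<bar> * N f" using B unfolding banach_mfs_def by blast
lemma bm_tri: "f \<in> X \<Longrightarrow> g \<in> X \<Longrightarrow> N (\<lambda>x. f x + g x) \<le> N f + N g" using B unfolding banach_mfs_def by blast
lemma bm_complete: "(\<And>n. s n \<in> X) \<Longrightarrow> (\<forall>e>0. \<exists>K. \<forall>m\<ge>K. \<forall>n\<ge>K. N (\<lambda>x. s m x - s n x) < e) \<Longrightarrow>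
          (\<exists>f\<in>X. (\<lambda>n. N (\<lambda>x. s n x - f x)) \<longlonglongrightarrow> 0)" using B unfolding banach_mfs_def by blast

lemma bm_diff: assumes "f \<in> X" "g \<in> X" shows "(\<lambda>x. f x - g x) \<in> X"
proof -
  have "(\<lambda>x. f x + (-1) * g x) \<in> X" using assms bm_add bm_scale by blast
  then show ?thesis by simp
qed

lemma bm_swap: assumes "f \<in> X" "g \<in> X" shows "N (\<lambda>x. f x - g x) = N (\<lambda>x. g x - f x)"
proof -
  have "N (\<lambda>x. (-1) * (g x - f x)) = N (\<lambda>x. g x - f x)"
    using bm_hom[OF bm_diff[OF assms(2,1)], of "-1"] by simp
  then show ?thesis by simp
qed

lemma bm_ae: assumes "f \<in> X" "g \<in> X" "AE x in M. f x = g x" shows "N f = N g"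
proof -
  have d1: "N (\<lambda>x. f x - g x) = 0" using bm_zero_iff[OF bm_diff[OF assms(1,2)]] assms(3) by auto
  have d2: "N (\<lambda>x. g x - f x) = 0" using bm_zero_iff[OF bm_diff[OF assms(2,1)]] assms(3) by auto
  have "N (\<lambda>x. g x + (f x - g x)) \<le> N g + N (\<lambda>x. f x - g x)" using bm_tri[OF assms(2) bm_diff[OF assms(1,2)]] .
  moreover have "N (\<lambda>x. f x + (g x - f x)) \<le> N f + N (\<lambda>x. g x - f x)" using bm_tri[OF assms(1) bm_diff[OF assms(2,1)]] .
  ultimately show ?thesis using d1 d2 by simp
qed

lemma bm_cong: assumes "f \<in> X" "g \<in> borel_measurable M" "\<And>x. x \<in> space M \<Longrightarrow> f x = g x"
  shows "g \<in> X" "N g = N f"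
proof -
  have ae: "AE x in M. f x = g x" using assms(3) by auto
  show g: "g \<in> X" using bm_sat[OF assms(1,2) ae] .
  have "AE x in M. g x = f x" using assms(3) by auto
  then show "N g = N f" using bm_ae[OF g assms(1)] by blast
qed

lemma bm_tri_diff: assumes "f \<in> X" "g \<in> X" "h \<in> X"
  shows "N (\<lambda>x. f x - h x) \<le> N (\<lambda>x. f x - g x) + N (\<lambda>x. g x - h x)"
  using bm_tri[OF bm_diff[OF assms(1,2)] bm_diff[OF assms(2,3)]] by simp

lemma bm_N0: "N (\<lambda>x. 0) = 0" using bm_zero_iff[OF bm_zero] by simp

lemma geo_le:
  assumes s: "\<And>n. s n \<in> X" and b: "\<And>n. N (\<lambda>x. s (Suc n) x - s n x) \<le> Bd * (1/2)^n"
  and nm: "n \<le> m"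
  shows "N (\<lambda>x. s m x - s n x) \<le> 2 * Bd * (1/2)^n - 2 * Bd * (1/2)^m"
    using nm
  proof (induction m rule: dec_induct)
    case base then show ?case using bm_N0 by simp
  next
    case (step m)
    have "N (\<lambda>x. s (Suc m) x - s n x) \<le> N (\<lambda>x. s (Suc m) x - s m x) + N (\<lambda>x. s m x - s n x)"
      using bm_tri_diff[OF s s s] .
    also have "\<dots> \<le> Bd * (1/2)^m + (2 * Bd * (1/2)^n - 2 * Bd * (1/2)^m)" using b step.IH by (intro add_mono) auto
    finally show ?case by simp
  qed

lemma geo_cauchy:
  assumes s: "\<And>n. s n \<in> X" and b: "\<And>n. N (\<lambda>x. s (Suc n) x - s n x) \<le> Bd * (1/2)^n"
  shows "\<exists>f\<in>X. (\<lambda>n. N (\<lambda>x. s n x - f x)) \<longlonglongrightarrow> 0"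
proof (rule bm_complete[OF s])
  have le: "N (\<lambda>x. s m x - s n x) \<le> 2 * Bd * (1/2)^n - 2 * Bd * (1/2)^m" if "n \<le> m" for m n
    using that
  proof (induction m rule: dec_induct)
    case base then show ?case using bm_N0 by simp
  next
    case (step m)
    have "N (\<lambda>x. s (Suc m) x - s n x) \<le> N (\<lambda>x. s (Suc m) x - s m x) + N (\<lambda>x. s m x - s n x)"
      using bm_tri_diff[OF s s s] .
    also have "\<dots> \<le> Bd * (1/2)^m + (2 * Bd * (1/2)^n - 2 * Bd * (1/2)^m)" using b step.IH by (intro add_mono) auto
    finally show ?case by simp
  qed
  have Bd: "0 \<le> Bd"
  proof -
    have "0 \<le> N (\<lambda>x. s (Suc 0) x - s 0 x)" by (rule bm_nonneg[OF bm_diff[OF s s]])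
    then show ?thesis using b[of 0] by simp
  qed
  show "\<forall>e>0. \<exists>K. \<forall>m\<ge>K. \<forall>n\<ge>K. N (\<lambda>x. s m x - s n x) < e"
  proof (intro allI impI)
    fix e :: real assume e: "e > 0"
    have epos: "e / (2 * Bd + 1) > 0" using e Bd by simp
    obtain K where K: "(1/2::real)^K < e / (2 * Bd + 1)"
      using real_arch_pow_inv[where y="e / (2 * Bd + 1)" and x="1/2", OF epos] by auto
    have "2 * Bd * (1/2)^K < e"
    proof -
      have "2 * Bd * (1/2::real)^K \<le> (2 * Bd + 1) * (1/2)^K" using Bd by (intro mult_right_mono) auto
      also have "\<dots> < (2 * Bd + 1) * (e / (2 * Bd + 1))" using K Bd by (intro mult_strict_left_mono) auto
      finally show ?thesis using Bd by simp
    qed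
    have main: "N (\<lambda>x. s m x - s n x) < e" if "n \<le> m" "K \<le> n" for m n
    proof -
      have "N (\<lambda>x. s m x - s n x) \<le> 2 * Bd * (1/2)^n" 
      proof -
        have "0 \<le> 2 * Bd * (1/2::real)^m" using Bd by simp
        then show ?thesis using le[OF that(1)] by linarith
      qed
      also have "\<dots> \<le> 2 * Bd * (1/2)^K" using Bd that(2) by (intro mult_left_mono power_decreasing) auto
      finally show ?thesis using \<open>2 * Bd * (1/2)^K < e\<close> by simp
    qed
    show "\<exists>K. \<forall>m\<ge>K. \<forall>n\<ge>K. N (\<lambda>x. s m x - s n x) < e"
    proof (intro exI allI impI)
      fix m n assume "K \<le> m" "K \<le> n"
      show "N (\<lambda>x. s m x - s n x) < e"
      proof (cases "n \<le> m")
        case True then show ?thesis using main \<open>K \<le> n\<close> by simp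
      next
        case False
        then have "N (\<lambda>x. s n x - s m x) < e" using main[of m n] \<open>K \<le> m\<close> by simp
        then show ?thesis using bm_swap[OF s s, of m n] by simp
      qed
    qed
  qed
qed

end


lemma floor_step: fixes y :: real shows "real_of_int \<lfloor>2 * y\<rfloor> = 2 * real_of_int \<lfloor>y\<rfloor> \<or> real_of_int \<lfloor>2*y\<rfloor> = 2 * real_of_int \<lfloor>y\<rfloor> + 1"
proof -
  have f1: "real_of_int \<lfloor>y\<rfloor> \<le> y" "y < real_of_int \<lfloor>y\<rfloor> + 1" by linarith+
  have f2: "real_of_int \<lfloor>2*y\<rfloor> \<le> 2*y" "2*y < real_of_int \<lfloor>2*y\<rfloor> + 1" by linarith+
  have "real_of_int (2 * \<lfloor>y\<rfloor>) \<le> 2 * y" using f1 by simp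
  then have a: "2 * \<lfloor>y\<rfloor> \<le> \<lfloor>2*y\<rfloor>" by (simp add: le_floor_iff)
  have "real_of_int \<lfloor>2*y\<rfloor> < real_of_int (2 * \<lfloor>y\<rfloor> + 2)" using f1 f2 by linarith
  then have b: "\<lfloor>2*y\<rfloor> < 2 * \<lfloor>y\<rfloor> + 2" by (simp only: of_int_less_iff)
  from a b have "\<lfloor>2*y\<rfloor> = 2 * \<lfloor>y\<rfloor> \<or> \<lfloor>2*y\<rfloor> = 2 * \<lfloor>y\<rfloor> + 1" by linarith
  then show ?thesis by auto
qed

lemma dyadic_lim: "(\<lambda>n. real_of_int \<lfloor>2^n * y\<rfloor> / 2^n) \<longlonglongrightarrow> (y::real)"
proof (rule tendsto_sandwich[of "\<lambda>n. y - (1/2)^n" _ sequentially "\<lambda>n. y"])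
  show "\<forall>\<^sub>F n in sequentially. y - (1/2)^n \<le> real_of_int \<lfloor>2^n * y\<rfloor> / 2^n"
  proof (intro always_eventually allI)
    fix n :: nat
    have "2^n * y < real_of_int \<lfloor>2^n * y\<rfloor> + 1" by linarith
    then have "y < (real_of_int \<lfloor>2^n * y\<rfloor> + 1) / 2^n" by (simp add: field_simps)
    then show "y - (1/2)^n \<le> real_of_int \<lfloor>2^n * y\<rfloor> / 2^n" by (simp add: power_one_over add_divide_distrib)
  qed
  show "\<forall>\<^sub>F n in sequentially. real_of_int \<lfloor>2^n * y\<rfloor> / 2^n \<le> y"
  proof (intro always_eventually allI)
    fix n :: nat
    have "real_of_int \<lfloor>2^n * y\<rfloor> \<le> 2^n * y" by linarith
    then show "real_of_int \<lfloor>2^n * y\<rfloor> / 2^n \<le> y" by (simp add: field_simps)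
  qed
  have "(\<lambda>n. y - (1/2::real)^n) \<longlonglongrightarrow> y - 0" by (intro tendsto_intros) simp
  then show "(\<lambda>n. y - (1/2::real)^n) \<longlonglongrightarrow> y" by simp
qed simp

lemma key:
  assumes B: "banach_mfs M X N" and C: "C > 0"
    and R: "\<forall>f\<in>X. \<forall>A\<in>sets M. (\<lambda>x. indicator A x * f x) \<in> X \<and> N (\<lambda>x. indicator A x * f x) \<le> C * N f"
    and SP: "subsequence_property M X N"
    and g: "g \<in> X" and phi: "\<phi> \<in> borel_measurable M" and bd: "\<And>x. \<bar>\<phi> x\<bar> \<le> 1"
  shows "(\<lambda>x. \<phi> x * g x) \<in> X \<and> N (\<lambda>x. \<phi> x * g x) \<le> 4 * C * N g"
proof -
  note gm = bm_meas[OF B g]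
  define s where "s n = (\<lambda>x. (real_of_int \<lfloor>2^n * \<phi> x\<rfloor> / 2^n) * g x)" for n :: nat
  have sm: "s n \<in> borel_measurable M" for n unfolding s_def using phi gm by measurable
  have RX: "(\<lambda>x. indicator A x * f x) \<in> X" "N (\<lambda>x. indicator A x * f x) \<le> C * N f"
    if "f \<in> X" "A \<in> sets M" for f A using R that by auto
  define A1 where "A1 = {x\<in>space M. \<phi> x = 1}"
  define A2 where "A2 = {x\<in>space M. \<phi> x < 0}"
  have A12: "A1 \<in> sets M" "A2 \<in> sets M" unfolding A1_def A2_def using phi by measurable
  define t0 where "t0 = (\<lambda>x. indicator A1 x * g x + (-1) * (indicator A2 x * g x))"
  have t0X: "t0 \<in> X" unfolding t0_def using RX[OF g A12(1)] RX[OF g A12(2)] bm_add[OF B] bm_scale[OF B] by blast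
  have t0N: "N t0 \<le> 2 * C * N g"
  proof -
    have "N t0 \<le> N (\<lambda>x. indicator A1 x * g x) + N (\<lambda>x. (-1) * (indicator A2 x * g x))"
      unfolding t0_def by (rule bm_tri[OF B RX(1)[OF g A12(1)] bm_scale[OF B RX(1)[OF g A12(2)]]])
    also have "\<dots> = N (\<lambda>x. indicator A1 x * g x) + N (\<lambda>x. indicator A2 x * g x)"
      using bm_hom[OF B RX(1)[OF g A12(2)], of "-1"] by simp
    also have "\<dots> \<le> C * N g + C * N g" using RX(2)[OF g A12(1)] RX(2)[OF g A12(2)] by (rule add_mono)
    finally show ?thesis by simp
  qed
  have s0eq: "t0 x = s 0 x" if "x \<in> space M" for x
  proof -
    have "real_of_int \<lfloor>\<phi> x\<rfloor> = indicator A1 x - indicator A2 x"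
    proof (cases "\<phi> x = 1")
      case True then show ?thesis using that unfolding A1_def A2_def by simp
    next
      case False
      show ?thesis
      proof (cases "\<phi> x < 0")
        case True
        then have "\<lfloor>\<phi> x\<rfloor> = -1" using bd[of x] by (simp add: floor_eq_iff)
        then show ?thesis using that True unfolding A1_def A2_def by auto
      next
        case F2: False
        then have "\<lfloor>\<phi> x\<rfloor> = 0" using bd[of x] False by (simp add: floor_eq_iff abs_le_iff)
        then show ?thesis using that False F2 unfolding A1_def A2_def by auto
      qed
    qed
    moreover have "s 0 x = real_of_int \<lfloor>\<phi> x\<rfloor> * g x" unfolding s_def by simp
    ultimately show ?thesis unfolding t0_def by (simp add: left_diff_distrib)
  qed
  have s0X: "s 0 \<in> X" and s0N: "N (s 0) = N t0" using bm_cong[OF B t0X sm s0eq] by auto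
  define F where "F n x = real_of_int \<lfloor>2^n * \<phi> x\<rfloor>" for n :: nat and x
  have Fm: "F n \<in> borel_measurable M" for n unfolding F_def using phi by measurable
  define An where "An n = {x\<in>space M. F (Suc n) x \<noteq> 2 * F n x}" for n :: nat
  have An: "An n \<in> sets M" for n
  proof -
    have "{x\<in>space M. F (Suc n) x - 2 * F n x \<noteq> 0} \<in> sets M"
      using borel_measurable_diff[OF Fm borel_measurable_times[OF borel_measurable_const Fm]] by measurable
    then show ?thesis unfolding An_def by simp
  qed
  define d where "d n = (\<lambda>x. (1/2)^(Suc n) * (indicator (An n) x * g x))" for n :: nat
  have dX: "d n \<in> X" for n unfolding d_def using bm_scale[OF B RX(1)[OF g An]] .
  have dN: "N (d n) \<le> (C * N g) * (1/2)^n" for n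
  proof -
    have "N (d n) = \<bar>(1/2)^(Suc n)\<bar> * N (\<lambda>x. indicator (An n) x * g x)"
      unfolding d_def by (rule bm_hom[OF B RX(1)[OF g An]])
    also have "\<bar>(1/2::real)^(Suc n)\<bar> = (1/2)^(Suc n)" by simp
    finally have "N (d n) = (1/2)^(Suc n) * N (\<lambda>x. indicator (An n) x * g x)" .
    also have "\<dots> \<le> (1/2)^(Suc n) * (C * N g)" using RX(2)[OF g An] by (intro mult_left_mono) auto
    also have "\<dots> \<le> (1/2)^n * (C * N g)"
      using C bm_nonneg[OF B g] by (intro mult_right_mono) (auto simp: power_decreasing)
    finally show ?thesis by (simp add: mult.commute)
  qed
  have deq: "s (Suc n) x - s n x = d n x" if "x \<in> space M" for n x
  proof -
    let ?y = "2^n * \<phi> x"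
    have e: "2^(Suc n) * \<phi> x = 2 * ?y" by simp
    have cs: "F (Suc n) x = 2 * F n x \<or> F (Suc n) x = 2 * F n x + 1"
      using floor_step[of ?y] unfolding F_def e .
    have "F (Suc n) x - 2 * F n x = indicator (An n) x"
      using cs that unfolding An_def by auto
    then have eq: "F (Suc n) x / 2^(Suc n) - F n x / 2^n = (1/2)^(Suc n) * indicator (An n) x"
      by (simp add: field_simps power_one_over)
    have "s (Suc n) x - s n x = (F (Suc n) x / 2^(Suc n) - F n x / 2^n) * g x"
      unfolding s_def F_def by (simp only: left_diff_distrib)
    also have "\<dots> = ((1/2)^(Suc n) * indicator (An n) x) * g x" by (simp only: eq)
    finally show ?thesis unfolding d_def by (simp only: mult.assoc)
  qed
  have sX: "s n \<in> X" for n
  proof (induction n)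
    case 0 then show ?case using s0X .
  next
    case (Suc n)
    have "(\<lambda>x. s n x + d n x) \<in> X" using bm_add[OF B Suc dX] .
    moreover have "s n x + d n x = s (Suc n) x" if "x \<in> space M" for x using deq[OF that, of n] by simp
    ultimately show ?case using bm_cong[OF B _ sm] by blast
  qed
  have sd: "N (\<lambda>x. s (Suc n) x - s n x) \<le> (C * N g) * (1/2)^n" for n
  proof -
    have "N (\<lambda>x. s (Suc n) x - s n x) = N (d n)"
      using bm_cong(2)[OF B bm_diff[OF B sX sX] bm_meas[OF B dX], of "Suc n" n] deq by simp
    then show ?thesis using dN by simp
  qed
  obtain h where hX: "h \<in> X" and hlim: "(\<lambda>n. N (\<lambda>x. s n x - h x)) \<longlonglongrightarrow> 0"
    using geo_cauchy[OF B sX sd] by blast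
  obtain r where r: "strict_mono r" and ae: "AE x in M. (\<lambda>n. s (r n) x) \<longlonglongrightarrow> h x"
    using SP sX hX hlim unfolding subsequence_property_def by blast
  have pw: "(\<lambda>n. s n x) \<longlonglongrightarrow> \<phi> x * g x" for x
    unfolding s_def by (intro tendsto_intros dyadic_lim)
  have ae2: "AE x in M. h x = \<phi> x * g x"
    using ae
  proof (rule AE_mp, intro AE_I2 impI)
    fix x assume "(\<lambda>n. s (r n) x) \<longlonglongrightarrow> h x"
    moreover have "(\<lambda>n. s (r n) x) \<longlonglongrightarrow> \<phi> x * g x" using LIMSEQ_subseq_LIMSEQ[OF pw[of x] r] by (simp add: o_def)
    ultimately show "h x = \<phi> x * g x" using LIMSEQ_unique by blast
  qed
  have pgm: "(\<lambda>x. \<phi> x * g x) \<in> borel_measurable M" using phi gm by measurable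
  have pgX: "(\<lambda>x. \<phi> x * g x) \<in> X" using bm_sat[OF B hX pgm ae2] .
  have ae3: "AE x in M. \<phi> x * g x = h x" using ae2 by auto
  have Nh: "N (\<lambda>x. \<phi> x * g x) = N h" using bm_ae[OF B pgX hX ae3] .
  have snb: "N (s n) \<le> 4 * C * N g" for n
  proof -
    have "N (\<lambda>x. s 0 x + (s n x - s 0 x)) \<le> N (s 0) + N (\<lambda>x. s n x - s 0 x)"
      using bm_tri[OF B sX bm_diff[OF B sX sX]] .
    moreover have "N (\<lambda>x. s n x - s 0 x) \<le> 2 * (C * N g) * (1/2)^0 - 2 * (C * N g) * (1/2)^n"
      using geo_le[OF B sX sd, of 0 n] by simp
    moreover have "0 \<le> 2 * (C * N g) * (1/2::real)^n" using C bm_nonneg[OF B g] by simp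
    ultimately show ?thesis using t0N s0N by simp
  qed
  have hb: "N h \<le> 4 * C * N g + N (\<lambda>x. s n x - h x)" for n
  proof -
    have "N (\<lambda>x. s n x + (h x - s n x)) \<le> N (s n) + N (\<lambda>x. h x - s n x)"
      using bm_tri[OF B sX bm_diff[OF B hX sX]] .
    then show ?thesis using snb[of n] bm_swap[OF B hX sX, of n] by simp
  qed
  have "(\<lambda>n. 4 * C * N g + N (\<lambda>x. s n x - h x)) \<longlonglongrightarrow> 4 * C * N g + 0"
    by (intro tendsto_intros hlim)
  then have "N h \<le> 4 * C * N g + 0" using hb by (intro LIMSEQ_le_const) auto
  then show ?thesis using pgX Nh by simp
qed



lemma factor:
  fixes f g :: "'a \<Rightarrow> real"
  assumes f: "f \<in> borel_measurable M" and g: "g \<in> borel_measurable M" and ae: "AE x in M. \<bar>f x\<bar> \<le> \<bar>g x\<bar>"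
  shows "\<exists>\<phi>. \<phi> \<in> borel_measurable M \<and> (\<forall>x. \<bar>\<phi> x\<bar> \<le> 1) \<and> (AE x in M. f x = \<phi> x * g x)"
proof -
  define \<phi> where "\<phi> x = max (-1) (min 1 (if g x = 0 then 0 else f x / g x))" for x
  have m: "\<phi> \<in> borel_measurable M" unfolding \<phi>_def using f g by measurable
  have b: "\<forall>x. \<bar>\<phi> x\<bar> \<le> 1" unfolding \<phi>_def by auto
  have "AE x in M. f x = \<phi> x * g x"
    using ae
  proof (rule AE_mp, intro AE_I2 impI)
    fix x assume le: "\<bar>f x\<bar> \<le> \<bar>g x\<bar>"
    show "f x = \<phi> x * g x"
    proof (cases "g x = 0")
      case True then show ?thesis using le by simp
    next
      case False
      then have "\<bar>f x / g x\<bar> \<le> 1" using le by (simp add: abs_divide divide_le_eq_1)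
      then have "-1 \<le> f x / g x \<and> f x / g x \<le> 1" unfolding abs_le_iff by linarith
      then have "\<phi> x = f x / g x" unfolding \<phi>_def using False by (simp add: min_absorb2 max_absorb2)
      then show ?thesis using False by simp
    qed
  qed
  then show ?thesis using m b by blast
qed

definition NN :: "'a measure \<Rightarrow> (('a \<Rightarrow> real) \<Rightarrow> real) \<Rightarrow> ('a \<Rightarrow> real) \<Rightarrow> real" where
  "NN M N f = Sup {N (\<lambda>x. \<psi> x * f x) | \<psi>. \<psi> \<in> borel_measurable M \<and> (\<forall>x. \<bar>\<psi> x\<bar> \<le> 1)}"

context
  fixes M :: "'a measure" and X and N and C :: real
  assumes B: "banach_mfs M X N" and C: "C > 0"
    and R: "\<forall>f\<in>X. \<forall>A\<in>sets M. (\<lambda>x. indicator A x * f x) \<in> X \<and> N (\<lambda>x. indicator A x * f x) \<le> C * N f"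
    and SP: "subsequence_property M X N"
begin

lemma kX: "g \<in> X \<Longrightarrow> \<phi> \<in> borel_measurable M \<Longrightarrow> (\<And>x. \<bar>\<phi> x\<bar> \<le> 1) \<Longrightarrow> (\<lambda>x. \<phi> x * g x) \<in> X"
  using key[OF B C R SP] by blast
lemma kN: "g \<in> X \<Longrightarrow> \<phi> \<in> borel_measurable M \<Longrightarrow> (\<And>x. \<bar>\<phi> x\<bar> \<le> 1) \<Longrightarrow> N (\<lambda>x. \<phi> x * g x) \<le> 4 * C * N g"
  using key[OF B C R SP] by blast

lemma ideal: assumes f: "f \<in> borel_measurable M" and g: "g \<in> X" and ae: "AE x in M. \<bar>f x\<bar> \<le> \<bar>g x\<bar>"
  shows "f \<in> X"
proof -
  obtain \<phi> where p: "\<phi> \<in> borel_measurable M" "\<forall>x. \<bar>\<phi> x\<bar> \<le> 1" "AE x in M. f x = \<phi> x * g x"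
    using factor[OF f bm_meas[OF B g] ae] by blast
  have "AE x in M. \<phi> x * g x = f x" using p(3) by auto
  then show ?thesis using bm_sat[OF B kX[OF g p(1)] f] p(2) by blast
qed

abbreviation "SS f \<equiv> {N (\<lambda>x. \<psi> x * f x) | \<psi>. \<psi> \<in> borel_measurable M \<and> (\<forall>x. \<bar>\<psi> x\<bar> \<le> 1)}"

lemma SS_bdd: "f \<in> X \<Longrightarrow> bdd_above (SS f)"
  unfolding bdd_above_def using kN by blast

lemma SS_mem: "\<psi> \<in> borel_measurable M \<Longrightarrow> (\<And>x. \<bar>\<psi> x\<bar> \<le> 1) \<Longrightarrow> N (\<lambda>x. \<psi> x * f x) \<in> SS f"
  by blast

lemma SS_ne: "SS f \<noteq> {}"
proof -
  have "N (\<lambda>x. 1 * f x) \<in> SS f" by (rule SS_mem) auto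
  then show ?thesis by blast
qed

lemma NN_upper: "f \<in> X \<Longrightarrow> \<psi> \<in> borel_measurable M \<Longrightarrow> (\<And>x. \<bar>\<psi> x\<bar> \<le> 1) \<Longrightarrow> N (\<lambda>x. \<psi> x * f x) \<le> NN M N f"
  unfolding NN_def by (rule cSup_upper[OF SS_mem SS_bdd])

lemma NN_least: "(\<And>\<psi>. \<psi> \<in> borel_measurable M \<Longrightarrow> (\<forall>x. \<bar>\<psi> x\<bar> \<le> 1) \<Longrightarrow> N (\<lambda>x. \<psi> x * f x) \<le> a) \<Longrightarrow> NN M N f \<le> a"
  unfolding NN_def by (rule cSup_least[OF SS_ne]) blast

lemma NN_ge: "f \<in> X \<Longrightarrow> N f \<le> NN M N f"
  using NN_upper[of f "\<lambda>x. 1"] by simp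

lemma NN_le: "f \<in> X \<Longrightarrow> NN M N f \<le> 4 * C * N f"
  by (rule NN_least) (auto intro: kN)

lemma NN_nonneg: "f \<in> X \<Longrightarrow> 0 \<le> NN M N f"
  using NN_ge bm_nonneg[OF B] by (metis order_trans)

lemma NN_mono: assumes f: "f \<in> X" and g: "g \<in> X" and ae: "AE x in M. \<bar>f x\<bar> \<le> \<bar>g x\<bar>"
  shows "NN M N f \<le> NN M N g"
proof (rule NN_least)
  fix \<psi> :: "'a \<Rightarrow> real" assume psi: "\<psi> \<in> borel_measurable M" "\<forall>x. \<bar>\<psi> x\<bar> \<le> 1"
  obtain \<phi> where p: "\<phi> \<in> borel_measurable M" "\<forall>x. \<bar>\<phi> x\<bar> \<le> 1" "AE x in M. f x = \<phi> x * g x"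
    using factor[OF bm_meas[OF B f] bm_meas[OF B g] ae] by blast
  have pp: "(\<lambda>x. \<psi> x * \<phi> x) \<in> borel_measurable M" using psi p by measurable
  have pb: "\<bar>\<psi> x * \<phi> x\<bar> \<le> 1" for x using psi(2) p(2) by (simp add: abs_mult mult_le_one)
  have ae2: "AE x in M. \<psi> x * f x = (\<psi> x * \<phi> x) * g x" using p(3) by auto
  have "N (\<lambda>x. \<psi> x * f x) = N (\<lambda>x. (\<psi> x * \<phi> x) * g x)"
    using bm_ae[OF B kX[OF f psi(1)] kX[OF g pp pb] ae2] psi(2) by blast
  also have "\<dots> \<le> NN M N g" using NN_upper[OF g pp pb] .
  finally show "N (\<lambda>x. \<psi> x * f x) \<le> NN M N g" .
qed

lemma NN_tri: assumes f: "f \<in> X" and g: "g \<in> X" shows "NN M N (\<lambda>x. f x + g x) \<le> NN M N f + NN M N g"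
proof (rule NN_least)
  fix \<psi> :: "'a \<Rightarrow> real" assume psi: "\<psi> \<in> borel_measurable M" "\<forall>x. \<bar>\<psi> x\<bar> \<le> 1"
  have "N (\<lambda>x. \<psi> x * (f x + g x)) = N (\<lambda>x. \<psi> x * f x + \<psi> x * g x)" by (simp add: distrib_left)
  also have "\<dots> \<le> N (\<lambda>x. \<psi> x * f x) + N (\<lambda>x. \<psi> x * g x)"
    using bm_tri[OF B kX[OF f psi(1)] kX[OF g psi(1)]] psi(2) by blast
  also have "\<dots> \<le> NN M N f + NN M N g" using NN_upper[OF f psi(1)] NN_upper[OF g psi(1)] psi(2) by (meson add_mono)
  finally show "N (\<lambda>x. \<psi> x * (f x + g x)) \<le> NN M N f + NN M N g" .
qed

lemma NN_hom_le: assumes f: "f \<in> X" shows "NN M N (\<lambda>x. c * f x) \<le> \<bar>c\<bar> * NN M N f"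
proof (rule NN_least)
  fix \<psi> :: "'a \<Rightarrow> real" assume psi: "\<psi> \<in> borel_measurable M" "\<forall>x. \<bar>\<psi> x\<bar> \<le> 1"
  have "N (\<lambda>x. \<psi> x * (c * f x)) = N (\<lambda>x. c * (\<psi> x * f x))" by (simp add: ac_simps)
  also have "\<dots> = \<bar>c\<bar> * N (\<lambda>x. \<psi> x * f x)" using bm_hom[OF B kX[OF f psi(1)]] psi(2) by blast
  also have "\<dots> \<le> \<bar>c\<bar> * NN M N f" using NN_upper[OF f psi(1)] psi(2) by (simp add: mult_left_mono)
  finally show "N (\<lambda>x. \<psi> x * (c * f x)) \<le> \<bar>c\<bar> * NN M N f" .
qed

lemma NN_hom: assumes f: "f \<in> X" shows "NN M N (\<lambda>x. c * f x) = \<bar>c\<bar> * NN M N f"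
proof (cases "c = 0")
  case True
  have "NN M N (\<lambda>x. c * f x) \<le> 0" using NN_hom_le[OF f, of c] True by simp
  moreover have "0 \<le> NN M N (\<lambda>x. c * f x)" using NN_nonneg bm_scale[OF B f] by blast
  ultimately show ?thesis using True by simp
next
  case False
  have "NN M N (\<lambda>x. (1/c) * (c * f x)) \<le> \<bar>1/c\<bar> * NN M N (\<lambda>x. c * f x)"
    using NN_hom_le[OF bm_scale[OF B f]] .
  then have "NN M N f \<le> \<bar>1/c\<bar> * NN M N (\<lambda>x. c * f x)" using False by simp
  then have "\<bar>c\<bar> * NN M N f \<le> NN M N (\<lambda>x. c * f x)" using False
    by (simp add: field_simps abs_divide)
  then show ?thesis using NN_hom_le[OF f, of c] by simp
qed

lemma NN_zero_iff: "f \<in> X \<Longrightarrow> NN M N f = 0 \<longleftrightarrow> (AE x in M. f x = 0)"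
proof -
  assume f: "f \<in> X"
  have "NN M N f = 0 \<longleftrightarrow> N f = 0"
  proof
    assume "NN M N f = 0" then show "N f = 0" using NN_ge[OF f] bm_nonneg[OF B f] by linarith
  next
    assume h: "N f = 0"
    have "NN M N f \<le> 0" using NN_le[OF f] h by simp
    moreover have "0 \<le> NN M N f" using NN_ge[OF f] h by simp
    ultimately show "NN M N f = 0" by simp
  qed
  then show ?thesis using bm_zero_iff[OF B f] by simp
qed

lemma NN_banach: "banach_mfs M X (NN M N)"
proof -
  have compl: "\<exists>f\<in>X. (\<lambda>n. NN M N (\<lambda>x. s n x - f x)) \<longlonglongrightarrow> 0"
    if s: "\<forall>n. s n \<in> X" and cau: "\<forall>e>0. \<exists>K. \<forall>m\<ge>K. \<forall>n\<ge>K. NN M N (\<lambda>x. s m x - s n x) < e" for s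
  proof -
    have cau2: "\<forall>e>0. \<exists>K. \<forall>m\<ge>K. \<forall>n\<ge>K. N (\<lambda>x. s m x - s n x) < e"
    proof (intro allI impI)
      fix e :: real assume "e > 0"
      then obtain K where K: "\<forall>m\<ge>K. \<forall>n\<ge>K. NN M N (\<lambda>x. s m x - s n x) < e" using cau by blast
      have "\<forall>m\<ge>K. \<forall>n\<ge>K. N (\<lambda>x. s m x - s n x) < e"
        using K NN_ge[OF bm_diff[OF B]] s by (meson le_less_trans)
      then show "\<exists>K. \<forall>m\<ge>K. \<forall>n\<ge>K. N (\<lambda>x. s m x - s n x) < e" by blast
    qed
    obtain f where f: "f \<in> X" and lim: "(\<lambda>n. N (\<lambda>x. s n x - f x)) \<longlonglongrightarrow> 0"
      using bm_complete[OF B, of s] s cau2 by blast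
    have "(\<lambda>n. NN M N (\<lambda>x. s n x - f x)) \<longlonglongrightarrow> 0"
    proof (rule tendsto_sandwich[of "\<lambda>n. 0" _ sequentially "\<lambda>n. 4 * C * N (\<lambda>x. s n x - f x)"])
      show "\<forall>\<^sub>F n in sequentially. 0 \<le> NN M N (\<lambda>x. s n x - f x)"
        using NN_nonneg bm_diff[OF B] s f by (simp add: always_eventually)
      show "\<forall>\<^sub>F n in sequentially. NN M N (\<lambda>x. s n x - f x) \<le> 4 * C * N (\<lambda>x. s n x - f x)"
        using NN_le bm_diff[OF B] s f by (simp add: always_eventually)
      have "(\<lambda>n. 4 * C * N (\<lambda>x. s n x - f x)) \<longlonglongrightarrow> 4 * C * 0" by (intro tendsto_intros lim)
      then show "(\<lambda>n. 4 * C * N (\<lambda>x. s n x - f x)) \<longlonglongrightarrow> 0" by simp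
    qed simp
    then show ?thesis using f by blast
  qed
  show ?thesis
    unfolding banach_mfs_def
    apply (intro conjI)
    using bm_meas[OF B] apply blast
    using bm_sat[OF B] apply blast
    using bm_zero[OF B] apply blast
    using bm_add[OF B] apply blast
    using bm_scale[OF B] apply blast
    using NN_nonneg apply blast
    using NN_zero_iff apply blast
    using NN_hom apply blast
    using NN_tri apply blast
    using compl apply blast
    done
qed

lemma NN_bfs: "banach_function_space M X (NN M N)"
  unfolding banach_function_space_def using NN_banach ideal NN_mono by blast

lemma NN_equiv: "equivalent_norms X N (NN M N)"
  unfolding equivalent_norms_def using NN_ge NN_le C
  by (intro exI[of _ 1] exI[of _ "4 * C"]) auto

end



context
  fixes M :: "'a measure" and X and P
  assumes F: "banach_function_space M X P"
begin

lemma FB: "banach_mfs M X P" using F unfolding banach_function_space_def by blast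
lemma Fideal: "f \<in> borel_measurable M \<Longrightarrow> g \<in> X \<Longrightarrow> (AE x in M. \<bar>f x\<bar> \<le> \<bar>g x\<bar>) \<Longrightarrow> f \<in> X"
  using F unfolding banach_function_space_def by blast
lemma Fmono: "f \<in> X \<Longrightarrow> g \<in> X \<Longrightarrow> (AE x in M. \<bar>f x\<bar> \<le> \<bar>g x\<bar>) \<Longrightarrow> P f \<le> P g"
  using F unfolding banach_function_space_def by blast

lemma SUB:
  assumes h: "\<And>n. h n \<in> X" and lim: "(\<lambda>n. P (h n)) \<longlonglongrightarrow> 0"
  shows "\<exists>r. strict_mono r \<and> (AE x in M. (\<lambda>n. h (r n) x) \<longlonglongrightarrow> 0)"
proof -
  have "\<forall>k. \<exists>K. \<forall>n\<ge>K. P (h n) < (1/2)^k"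
  proof
    fix k :: nat
    have "eventually (\<lambda>n. P (h n) < (1/2)^k) sequentially"
      using order_tendstoD(2)[OF lim, of "(1/2)^k"] by simp
    then show "\<exists>K. \<forall>n\<ge>K. P (h n) < (1/2)^k" by (simp add: eventually_sequentially)
  qed
  then obtain Nk where Nk: "\<And>k n. n \<ge> Nk k \<Longrightarrow> P (h n) < (1/2)^k" by metis
  define r where "r k = (\<Sum>j\<le>k. Nk j) + k" for k
  have r: "strict_mono r" unfolding strict_mono_Suc_iff r_def by simp
  have rge: "Nk k \<le> r k" for k
  proof -
    have "Nk k \<le> (\<Sum>j\<le>k. Nk j)" by (rule member_le_sum) auto
    then show ?thesis unfolding r_def by simp
  qed
  define u where "u k = (\<lambda>x. \<bar>h (r k) x\<bar>)" for k
  have um: "u k \<in> borel_measurable M" for k unfolding u_def using bm_meas[OF FB h] by measurable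
  have uX: "u k \<in> X" for k using Fideal[OF um h[of "r k"]] unfolding u_def by simp
  have uP: "P (u k) \<le> (1/2)^k" for k
  proof -
    have "P (u k) \<le> P (h (r k))" using Fmono[OF uX h] unfolding u_def by simp
    also have "\<dots> < (1/2)^k" using Nk[OF rge] .
    finally show ?thesis by simp
  qed
  have u0: "0 \<le> u k x" for k x unfolding u_def by simp
  define S where "S n = (\<lambda>x. \<Sum>k<n. u k x)" for n
  have SX: "S n \<in> X" for n
  proof (induction n)
    case 0 then show ?case unfolding S_def using bm_zero[OF FB] by simp
  next
    case (Suc n)
    have "(\<lambda>x. S n x + u n x) \<in> X" using bm_add[OF FB Suc uX] .
    then show ?case unfolding S_def by simp
  qed
  have Sd: "P (\<lambda>x. S (Suc n) x - S n x) \<le> 1 * (1/2)^n" for n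
  proof -
    have "(\<lambda>x. S (Suc n) x - S n x) = u n" unfolding S_def by (simp add: fun_eq_iff)
    then show ?thesis using uP by simp
  qed
  obtain g where gX: "g \<in> X" and glim: "(\<lambda>n. P (\<lambda>x. S n x - g x)) \<longlonglongrightarrow> 0"
    using geo_cauchy[OF FB SX Sd] by blast
  have Smono: "S n x \<le> S m x" if "n \<le> m" for n m x
    unfolding S_def using that u0 by (intro sum_mono2) auto
  have aen: "AE x in M. S n x \<le> g x" for n
  proof -
    define w where "w = (\<lambda>x. max (S n x - g x) 0)"
    have wm: "w \<in> borel_measurable M" unfolding w_def using bm_meas[OF FB SX] bm_meas[OF FB gX] by measurable
    have wle: "\<bar>w x\<bar> \<le> \<bar>S m x - g x\<bar>" if "n \<le> m" for m x
      using Smono[OF that, of x] unfolding w_def by auto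
    have wX: "w \<in> X" using Fideal[OF wm bm_diff[OF FB SX gX, of n]] wle[of n] by simp
    have "P w \<le> P (\<lambda>x. S m x - g x)" if "n \<le> m" for m
      using Fmono[OF wX bm_diff[OF FB SX gX]] wle[OF that] by simp
    then have "P w \<le> 0" using glim by (intro LIMSEQ_le_const[OF glim]) auto
    then have "P w = 0" using bm_nonneg[OF FB wX] by simp
    then have "AE x in M. w x = 0" using bm_zero_iff[OF FB wX] by simp
    then show ?thesis unfolding w_def by (auto elim: AE_mp)
  qed
  have "AE x in M. \<forall>n. S n x \<le> g x" using aen by (simp add: AE_all_countable)
  then have "AE x in M. (\<lambda>n. h (r n) x) \<longlonglongrightarrow> 0"
  proof (rule AE_mp, intro AE_I2 impI)
    fix x assume b: "\<forall>n. S n x \<le> g x"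
    have "summable (\<lambda>k. u k x)"
      by (rule summableI_nonneg_bounded[where x="g x"]) (use u0 b in \<open>auto simp: S_def\<close>)
    then have "(\<lambda>k. u k x) \<longlonglongrightarrow> 0" by (rule summable_LIMSEQ_zero)
    then show "(\<lambda>n. h (r n) x) \<longlonglongrightarrow> 0" unfolding u_def by (simp add: tendsto_rabs_zero_iff)
  qed
  then show ?thesis using r by blast
qed

end

lemma forward:
  assumes B: "banach_mfs M X N" and eq: "equivalent_norms X N P" and F: "banach_function_space M X P"
  shows "rectangular M X N \<and> subsequence_property M X N"
proof -
  obtain c C where c: "0 < c" "0 < C" and cC: "\<And>f. f \<in> X \<Longrightarrow> c * N f \<le> P f \<and> P f \<le> C * N f"
    using eq unfolding equivalent_norms_def by blast
  have rect: "rectangular M X N"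
    unfolding rectangular_def
  proof (intro exI[of _ "C / c"] conjI ballI)
    show "0 < C / c" using c by simp
    fix f A assume f: "f \<in> X" and A: "A \<in> sets M"
    have m: "(\<lambda>x. indicator A x * f x) \<in> borel_measurable M" using bm_meas[OF B f] A by measurable
    have le: "\<bar>indicator A x * f x\<bar> \<le> \<bar>f x\<bar>" for x by (simp add: indicator_def)
    show X: "(\<lambda>x. indicator A x * f x) \<in> X" using Fideal[OF F m f] le by simp
    have "P (\<lambda>x. indicator A x * f x) \<le> P f" using Fmono[OF F X f] le by simp
    then have "c * N (\<lambda>x. indicator A x * f x) \<le> C * N f" using cC[OF X] cC[OF f] by linarith
    then show "N (\<lambda>x. indicator A x * f x) \<le> C / c * N f" using c by (simp add: field_simps)
  qed
  have sp: "subsequence_property M X N"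
    unfolding subsequence_property_def
  proof (intro allI impI)
    fix fs f assume fs: "\<forall>n. fs n \<in> X" and f: "f \<in> X" and lim: "(\<lambda>n. N (\<lambda>x. fs n x - f x)) \<longlonglongrightarrow> 0"
    have dX: "(\<lambda>x. fs n x - f x) \<in> X" for n using bm_diff[OF B] fs f by blast
    have "(\<lambda>n. P (\<lambda>x. fs n x - f x)) \<longlonglongrightarrow> 0"
    proof (rule tendsto_sandwich[of "\<lambda>n. 0" _ sequentially "\<lambda>n. C * N (\<lambda>x. fs n x - f x)"])
      show "\<forall>\<^sub>F n in sequentially. 0 \<le> P (\<lambda>x. fs n x - f x)"
        using bm_nonneg[OF FB[OF F] dX] by (simp add: always_eventually)
      show "\<forall>\<^sub>F n in sequentially. P (\<lambda>x. fs n x - f x) \<le> C * N (\<lambda>x. fs n x - f x)"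
        using cC[OF dX] by (simp add: always_eventually)
      have "(\<lambda>n. C * N (\<lambda>x. fs n x - f x)) \<longlonglongrightarrow> C * 0" by (intro tendsto_intros lim)
      then show "(\<lambda>n. C * N (\<lambda>x. fs n x - f x)) \<longlonglongrightarrow> 0" by simp
    qed simp
    then obtain r where r: "strict_mono r" and ae: "AE x in M. (\<lambda>n. fs (r n) x - f x) \<longlonglongrightarrow> 0"
      using SUB[OF F, of "\<lambda>n x. fs n x - f x", OF dX] by blast
    have "AE x in M. (\<lambda>n. fs (r n) x) \<longlonglongrightarrow> f x"
      using ae
    proof (rule AE_mp, intro AE_I2 impI)
      fix x assume "(\<lambda>n. fs (r n) x - f x) \<longlonglongrightarrow> 0"
      then have "(\<lambda>n. (fs (r n) x - f x) + f x) \<longlonglongrightarrow> 0 + f x" by (intro tendsto_intros)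
      then show "(\<lambda>n. fs (r n) x) \<longlonglongrightarrow> f x" by simp
    qed
    then show "\<exists>r. strict_mono r \<and> (AE x in M. (\<lambda>n. fs (r n) x) \<longlonglongrightarrow> f x)" using r by blast
  qed
  show ?thesis using rect sp by blast
qed

theorem corollary4p2:
  fixes M :: "'a measure" and X :: "('a \<Rightarrow> real) set" and N :: "('a \<Rightarrow> real) \<Rightarrow> real"
  assumes "finite_measure M"
    and "banach_mfs M X N"
  shows "(\<exists>N'. equivalent_norms X N N' \<and> banach_function_space M X N')
         \<longleftrightarrow> (rectangular M X N \<and> subsequence_property M X N)"
proof
  assume "\<exists>N'. equivalent_norms X N N' \<and> banach_function_space M X N'"
  then show "rectangular M X N \<and> subsequence_property M X N" using forward[OF assms(2)] by blast
next
  assume a: "rectangular M X N \<and> subsequence_property M X N"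
  then obtain C where C: "C > 0" and R: "\<forall>f\<in>X. \<forall>A\<in>sets M. (\<lambda>x. indicator A x * f x) \<in> X \<and> N (\<lambda>x. indicator A x * f x) \<le> C * N f"
    unfolding rectangular_def by blast
  show "\<exists>N'. equivalent_norms X N N' \<and> banach_function_space M X N'"
    using NN_equiv[OF assms(2) C R] NN_bfs[OF assms(2) C R] a by blast
qed

end
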